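(* Let $n,t\ge 0$, $q\ge 2$, $b\ge 1$. For every $\boldsymbol{x}\in\Sigma_q^n$, \[ |\mathcal{I}_{t,b}(\boldsymbol{x})| = q^{t(b-1)}\sum_{i=0}^{t}\binom{n+t}{i}(q-1)^i . \] In particular, $I_{q,b}(n,t)=q^{t(b-1)}\sum_{i=0}^{t}\binom{n+t}{i}(q-1)^i$.
   Context: $\Sigma_q=\{0,1,\ldots,q-1\}$ and $\Sigma_q^n$ is the set of length-$n$ sequences over $\Sigma_q$ ($\Sigma_q^0$ contains only the empty sequence). A $b$-burst-insertion at position $i\in[1,n+1]$ transforms $x_1\cdots x_n$ into $x_1\cdots x_{i-1}y_1\cdots y_b x_i\cdots x_n$ for an arbitrary $y_1\cdots y_b\in\Sigma_q^b$. $\mathcal{I}_{t,b}(\boldsymbol{x})$ is the set of all sequences of length $n+tb$ obtainable from $\boldsymbol{x}$ by $t$ successive $b$-burst-insertions ($\mathcal{I}_{0,b}(\boldsymbol{x})=\{\boldsymbol{x}\}$). $I_{q,b}(n,t)=\max\{|\mathcal{I}_{t,b}(\boldsymbol{x})|:\boldsymbol{x}\in\Sigma_q^n\}$. Convention: $\binom{m}{i}=0$ if $m<i$. *)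

theory Defs
  imports Main
begin

definition seqs :: "nat \<Rightarrow> nat \<Rightarrow> nat list set" where
  "seqs q n = {x. length x = n \<and> set x \<subseteq> {..<q}}"

text \<open>All results of a single b-burst-insertion into x (insert y, |y| = b, after the first i
symbols, 0 <= i <= |x|; i.e. at position i+1 in the paper's 1-based convention).\<close>

definition burst_ins :: "nat \<Rightarrow> nat \<Rightarrow> nat list \<Rightarrow> nat list set" where
  "burst_ins q b x = {take i x @ y @ drop i x | i y. i \<le> length x \<and> y \<in> seqs q b}"

fun ins_ball :: "nat \<Rightarrow> nat \<Rightarrow> nat \<Rightarrow> nat list \<Rightarrow> nat list set" where
  "ins_ball q 0 b x = {x}"
| "ins_ball q (Suc t) b x = (\<Union>z \<in> ins_ball q t b x. burst_ins q b z)"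

definition I_max :: "nat \<Rightarrow> nat \<Rightarrow> nat \<Rightarrow> nat \<Rightarrow> nat" where
  "I_max q b n t = Max ((\<lambda>x. card (ins_ball q t b x)) ` seqs q n)"

end

theory Submission
  imports Defs
begin

lemma burst_ins_iff:
  "z \<in> burst_ins q b u \<longleftrightarrow> (\<exists>i y. z = take i u @ y @ drop i u \<and> i \<le> length u \<and> y \<in> seqs q b)"
  unfolding burst_ins_def by blast

lemma ins_len:
  "z \<in> ins_ball q t b x \<Longrightarrow> length z = length x + t*b"
proof (induction t arbitrary: z)
  case 0 then show ?case by simp
next
  case (Suc t)
  then obtain u i y where u: "u \<in> ins_ball q t b x" "z = take i u @ y @ drop i u"
    "i \<le> length u" "y \<in> seqs q b" by (auto simp: burst_ins_iff)
  then show ?case using Suc.IH[OF u(1)] by (auto simp: seqs_def)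
qed

lemma ins_valid:
  "set x \<subseteq> {..<q} \<Longrightarrow> z \<in> ins_ball q t b x \<Longrightarrow> set z \<subseteq> {..<q}"
proof (induction t arbitrary: z)
  case 0 then show ?case by simp
next
  case (Suc t)
  then obtain u i y where u: "u \<in> ins_ball q t b x" "z = take i u @ y @ drop i u"
    "i \<le> length u" "y \<in> seqs q b" by (auto simp: burst_ins_iff)
  have "set u \<subseteq> {..<q}" using Suc u(1) by blast
  then show ?case using u set_take_subset[of i u] set_drop_subset[of i u]
    by (auto simp: seqs_def)
qed

lemma ins_front:
  "y \<in> seqs q b \<Longrightarrow> w \<in> ins_ball q t b x \<Longrightarrow> y @ w \<in> ins_ball q (Suc t) b x"
  by (simp add: burst_ins_iff) (metis append_Nil drop0 le0 take0)

lemma ins_prefix: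
  "length p = k*b \<Longrightarrow> set p \<subseteq> {..<q} \<Longrightarrow> w \<in> ins_ball q s b x
   \<Longrightarrow> p @ w \<in> ins_ball q (s+k) b x"
proof (induction k arbitrary: p)
  case 0 then show ?case by simp
next
  case (Suc k)
  have "drop b p @ w \<in> ins_ball q (s+k) b x"
    using Suc.prems set_drop_subset[of b p] by (intro Suc.IH) auto
  moreover have "take b p \<in> seqs q b"
    using Suc.prems set_take_subset[of b p] by (auto simp: seqs_def)
  ultimately have "take b p @ (drop b p @ w) \<in> ins_ball q (Suc (s+k)) b x"
    by (rule ins_front[rotated])
  then show ?case by (metis append_assoc append_take_drop_id add_Suc_right)
qed

lemma ins_cons:
  "z \<in> ins_ball q t b x \<Longrightarrow> a # z \<in> ins_ball q t b (a # x)"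
proof (induction t arbitrary: z)
  case 0 then show ?case by simp
next
  case (Suc t)
  then obtain u i y where u: "u \<in> ins_ball q t b x" "z = take i u @ y @ drop i u"
    "i \<le> length u" "y \<in> seqs q b" by (auto simp: burst_ins_iff)
  have "a # z = take (Suc i) (a#u) @ y @ drop (Suc i) (a#u)" using u by simp
  moreover have "Suc i \<le> length (a#u)" using u by simp
  ultimately have "a # z \<in> burst_ins q b (a#u)" using u(4) unfolding burst_ins_iff by blast
  then show ?case using Suc.IH[OF u(1)] by auto
qed

lemma lemB:
  assumes b: "b \<ge> 1" and vx: "set x \<subseteq> {..<q}"
  shows "z \<in> ins_ball q t b x \<Longrightarrow> z \<noteq> [] \<Longrightarrow> (x = [] \<or> hd z \<noteq> hd x)
     \<Longrightarrow> t \<ge> 1 \<and> drop b z \<in> ins_ball q (t-1) b x"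
proof (induction t arbitrary: z)
  case 0 then show ?case by auto
next
  case (Suc t)
  then obtain u i y where u: "u \<in> ins_ball q t b x" "z = take i u @ y @ drop i u"
    "i \<le> length u" "y \<in> seqs q b" by (auto simp: burst_ins_iff)
  have ly: "length y = b" using u(4) by (simp add: seqs_def)
  show ?case
  proof (cases "i = 0")
    case True
    then show ?thesis using u ly by simp
  next
    case False
    then have "u \<noteq> []" using u(3) by auto
    moreover have "hd z = hd u" using False u(2) \<open>u \<noteq> []\<close>
      by (cases u; cases i) auto
    ultimately have IH: "t \<ge> 1 \<and> drop b u \<in> ins_ball q (t-1) b x"
      using Suc.IH[OF u(1)] Suc.prems by auto
    have lu: "length u \<ge> b" using ins_len[OF u(1)] IH
      by (metis le_add2 mult_1 mult_le_mono1 order_trans)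
    show ?thesis
    proof (cases "i \<ge> b")
      case True
      have "drop b z = take (i-b) (drop b u) @ y @ drop (i-b) (drop b u)"
        using True u(2,3) ly by (simp add: drop_take)
      moreover have "i - b \<le> length (drop b u)" using u(3) True by simp
      ultimately have "drop b z \<in> burst_ins q b (drop b u)" using u(4)
        by (auto simp: burst_ins_iff)
      then have "drop b z \<in> ins_ball q (Suc (t-1)) b x" using IH
        by (simp only: ins_ball.simps) blast
      moreover have "Suc (t-1) = t" using IH by simp
      ultimately show ?thesis using IH by simp
    next
      case False
      have dz: "drop b z = (drop (b-i) y @ take (b-i) (drop i u)) @ drop b u"
      proof -
        have "drop i u = take (b-i) (drop i u) @ drop (b-i) (drop i u)"
          by (rule append_take_drop_id[symmetric])
        also have "drop (b-i) (drop i u) = drop b u" using False by simp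
        finally have "drop i u = take (b-i) (drop i u) @ drop b u" .
        moreover have "drop b z = drop (b-i) y @ drop i u"
          using u(2,3) False ly by simp
        ultimately show ?thesis by simp
      qed
      have vu: "set u \<subseteq> {..<q}" using ins_valid[OF vx u(1)] .
      have "length (drop (b-i) y @ take (b-i) (drop i u)) = 1*b"
        using ly False lu u(3) by simp
      moreover have "set (drop (b-i) y @ take (b-i) (drop i u)) \<subseteq> {..<q}"
        using u(4) vu set_drop_subset[of "b-i" y] set_take_subset[of "b-i" "drop i u"]
          set_drop_subset[of i u] by (auto simp: seqs_def)
      ultimately have "drop b z \<in> ins_ball q (t-1+1) b x"
        unfolding dz by (rule ins_prefix) (use IH in auto)
      then show ?thesis using IH by simp
    qed
  qed
qed


lemma lemQ:
  assumes b: "b \<ge> 1" and v: "set (a#x') \<subseteq> {..<q}"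
    and A: "\<forall>s'\<le>S. \<forall>z'. a#z' \<in> ins_ball q s' b (a#x') \<longrightarrow> z' \<in> ins_ball q s' b x'"
  shows "s \<le> S \<Longrightarrow> w \<in> ins_ball q s b (a#x') \<Longrightarrow> length p + 1 = k*b \<Longrightarrow> set p \<subseteq> {..<q}
     \<Longrightarrow> p @ w \<in> ins_ball q (s+k) b x'"
proof (induction s arbitrary: k p w rule: less_induct)
  case (less s)
  have lw: "length w = Suc (length x') + s*b" using ins_len[OF less.prems(2)] by simp
  then obtain c w' where w: "w = c # w'" by (cases w) auto
  have vw: "set w \<subseteq> {..<q}" using ins_valid[OF v less.prems(2)] .
  show ?case
  proof (cases "c = a")
    case True
    then have "a#w' \<in> ins_ball q s b (a#x')" using less.prems(2) w by simp
    then have "w' \<in> ins_ball q s b x'" by (rule A[rule_format, OF less.prems(1)])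
    moreover have "length (p @ [a]) = k*b" using less.prems by simp
    moreover have "set (p @ [a]) \<subseteq> {..<q}" using less.prems v by auto
    ultimately have "(p @ [a]) @ w' \<in> ins_ball q (s+k) b x'"
      by (intro ins_prefix)
    then show ?thesis using w True by simp
  next
    case False
    have B: "s \<ge> 1 \<and> drop b w \<in> ins_ball q (s-1) b (a#x')"
      using lemB[OF b v less.prems(2)] w False by simp
    have "1*b \<le> s*b" using B by (intro mult_le_mono1) (simp del: ins_ball.simps)
    then have lwb: "length w \<ge> b" using lw by linarith
    have "p @ take b w @ drop b w \<in> ins_ball q (s-1+(k+1)) b x'"
    proof -
      have "(p @ take b w) @ drop b w \<in> ins_ball q (s-1+(k+1)) b x'"
      proof (rule less.IH)
        show "s - 1 < s" using B by simp
        show "s - 1 \<le> S" using less.prems by simp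
        show "drop b w \<in> ins_ball q (s - 1) b (a # x')" using B by simp
        show "length (p @ take b w) + 1 = (k + 1) * b" using less.prems lwb by simp
        show "set (p @ take b w) \<subseteq> {..<q}" using less.prems vw set_take_subset[of b w] by auto
      qed
      then show ?thesis by simp
    qed
    moreover have "s-1+(k+1) = s + k" using B by simp
    ultimately show ?thesis by simp
  qed
qed

lemma lemA:
  assumes b: "b \<ge> 1" and v: "set (a#x') \<subseteq> {..<q}"
  shows "a#z' \<in> ins_ball q t b (a#x') \<Longrightarrow> z' \<in> ins_ball q t b x'"
proof (induction t arbitrary: z' rule: less_induct)
  case (less t)
  show ?case
  proof (cases t)
    case 0 then show ?thesis using less.prems by simp
  next
    case (Suc t')
    have "\<exists>u\<in>ins_ball q t' b (a#x'). a#z' \<in> burst_ins q b u" using less.prems Suc by simp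
    then obtain u i y where u: "u \<in> ins_ball q t' b (a#x')" "a#z' = take i u @ y @ drop i u"
      "i \<le> length u" "y \<in> seqs q b" unfolding burst_ins_iff by blast
    have ly: "length y = b" using u(4) by (simp add: seqs_def)
    show ?thesis
    proof (cases i)
      case 0
      then have ay: "a#z' = y @ u" using u by simp
      obtain y' where y: "y = a # y'" using ly b ay by (cases y) auto
      have zz: "z' = y' @ u" using ay y by simp
      have "y' @ u \<in> ins_ball q (t'+1) b x'"
      proof (rule lemQ[OF b v])
        show "\<forall>s'\<le>t'. \<forall>z'. a # z' \<in> ins_ball q s' b (a # x') \<longrightarrow> z' \<in> ins_ball q s' b x'"
        proof (intro allI impI)
          fix s' z'' assume h1: "s' \<le> t'" and h2: "a # z'' \<in> ins_ball q s' b (a # x')"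
          have h3: "s' < t" using h1 Suc by simp
          show "z'' \<in> ins_ball q s' b x'" by (rule less.IH[OF h3 h2])
        qed
        show "length y' + 1 = 1 * b" using ly y by simp
        show "set y' \<subseteq> {..<q}" using u(4) y by (auto simp: seqs_def)
        show "t' \<le> t'" by (rule order_refl)
        show "u \<in> ins_ball q t' b (a # x')" by (rule u(1))
      qed
      then show ?thesis unfolding zz using Suc by (simp del: ins_ball.simps)
    next
      case (Suc i')
      then obtain u' where uu: "u = a # u'" using u(2,3) by (cases u) auto
      have "u' \<in> ins_ball q t' b x'" using less.IH[of t' u'] \<open>t = Suc t'\<close> u(1) uu by simp
      moreover have "z' = take i' u' @ y @ drop i' u'" "i' \<le> length u'"
        using u(2,3) uu Suc by auto
      ultimately have "z' \<in> burst_ins q b u'" using u(4) unfolding burst_ins_iff by blast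
      then show ?thesis using \<open>u' \<in> ins_ball q t' b x'\<close> \<open>t = Suc t'\<close>
        by (simp only: ins_ball.simps) (rule UN_I)
    qed
  qed
qed


lemma seqs_alt: "seqs q n = {xs. set xs \<subseteq> {..<q} \<and> length xs = n}"
  unfolding seqs_def by auto

lemma card_seqs: "card (seqs q n) = q ^ n"
  unfolding seqs_alt by (simp add: card_lists_length_eq)

lemma finite_seqs: "finite (seqs q n)"
  unfolding seqs_alt by (simp add: finite_lists_length_eq)

lemma ins_sub: "set x \<subseteq> {..<q} \<Longrightarrow> ins_ball q t b x \<subseteq> seqs q (length x + t*b)"
proof
  fix z assume v: "set x \<subseteq> {..<q}" and z: "z \<in> ins_ball q t b x"
  show "z \<in> seqs q (length x + t*b)" using ins_len[OF z] ins_valid[OF v z]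
    unfolding seqs_def by simp
qed

lemma finite_ins: "set x \<subseteq> {..<q} \<Longrightarrow> finite (ins_ball q t b x)"
  by (rule finite_subset[OF ins_sub finite_seqs])

lemma ins_empty: "ins_ball q t b [] = seqs q (t*b)"
proof
  show "ins_ball q t b [] \<subseteq> seqs q (t*b)" using ins_sub[of "[]" q t b] by simp
next
  show "seqs q (t*b) \<subseteq> ins_ball q t b []"
  proof (induction t)
    case 0 then show ?case by (auto simp: seqs_def)
  next
    case (Suc t)
    show ?case
    proof
      fix z assume z: "z \<in> seqs q (Suc t * b)"
      have "drop b z \<in> seqs q (t*b)" using z set_drop_subset[of b z] by (auto simp: seqs_def)
      then have d: "drop b z \<in> ins_ball q t b []" by (rule subsetD[OF Suc.IH])
      have "take b z \<in> seqs q b" using z set_take_subset[of b z] by (auto simp: seqs_def)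
      from ins_front[OF this d] show "z \<in> ins_ball q (Suc t) b []" by simp
    qed
  qed
qed

lemma decomp:
  assumes b: "b \<ge> 1" and v: "set (a#x) \<subseteq> {..<q}"
  shows "ins_ball q (Suc t) b (a#x) = Cons a ` ins_ball q (Suc t) b x \<union>
     (\<lambda>(c,y,w). c # y @ w) ` (({..<q}-{a}) \<times> seqs q (b-1) \<times> ins_ball q t b (a#x))"
proof
  show "ins_ball q (Suc t) b (a#x) \<subseteq> Cons a ` ins_ball q (Suc t) b x \<union>
     (\<lambda>(c,y,w). c # y @ w) ` (({..<q}-{a}) \<times> seqs q (b-1) \<times> ins_ball q t b (a#x))"
  proof
    fix z assume z: "z \<in> ins_ball q (Suc t) b (a#x)"
    have lz: "length z = Suc (length x) + Suc t * b" using ins_len[OF z] by simp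
    have vz: "set z \<subseteq> {..<q}" using ins_valid[OF v z] .
    obtain c z' where zc: "z = c # z'" using lz by (cases z) auto
    show "z \<in> Cons a ` ins_ball q (Suc t) b x \<union>
     (\<lambda>(c,y,w). c # y @ w) ` (({..<q}-{a}) \<times> seqs q (b-1) \<times> ins_ball q t b (a#x))"
    proof (cases "c = a")
      case True
      have "a # z' \<in> ins_ball q (Suc t) b (a#x)" using z unfolding zc True .
      then have "z' \<in> ins_ball q (Suc t) b x" by (rule lemA[OF b v])
      then have "z \<in> Cons a ` ins_ball q (Suc t) b x" unfolding zc True by (rule imageI)
      then show ?thesis by (rule UnI1)
    next
      case False
      have "1 \<le> Suc t \<and> drop b z \<in> ins_ball q (Suc t - 1) b (a#x)"
        by (rule lemB[OF b v z]) (simp_all add: zc False)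
      then have B: "drop b z \<in> ins_ball q t b (a#x)" by (simp del: ins_ball.simps)
      have dz: "drop b z = drop (b-1) z'" using zc b by (cases b) auto
      have e1a: "z = c # (take (b-1) z' @ drop (b-1) z')"
        unfolding append_take_drop_id by (rule zc)
      have e1: "z = c # take (b-1) z' @ drop b z" unfolding dz by (rule e1a)
      have e2: "c \<in> {..<q}-{a}" using vz False unfolding zc by simp
      have lz': "b - 1 \<le> length z'" using lz unfolding zc by simp
      have vz': "set z' \<subseteq> {..<q}" using vz unfolding zc by simp
      have e3: "take (b-1) z' \<in> seqs q (b-1)"
        unfolding seqs_def using lz' vz' set_take_subset[of "b-1" z'] by auto
      have eq: "z = (\<lambda>(c,y,w). c # y @ w) (c, take (b-1) z', drop b z)"
        unfolding prod.case by (rule e1)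
      have mem: "(c, take (b-1) z', drop b z) \<in> ({..<q}-{a}) \<times> seqs q (b-1) \<times> ins_ball q t b (a#x)"
        unfolding mem_Times_iff fst_conv snd_conv using e2 e3 B by (intro conjI)
      have "z \<in> (\<lambda>(c,y,w). c # y @ w) ` (({..<q}-{a}) \<times> seqs q (b-1) \<times> ins_ball q t b (a#x))"
        using mem eq by (rule rev_image_eqI)
      then show ?thesis by (rule UnI2)
    qed
  qed
next
  have "Cons a ` ins_ball q (Suc t) b x \<subseteq> ins_ball q (Suc t) b (a#x)"
  proof (rule image_subsetI)
    fix z' assume "z' \<in> ins_ball q (Suc t) b x"
    then show "a # z' \<in> ins_ball q (Suc t) b (a#x)" by (rule ins_cons)
  qed
  moreover have "(\<lambda>(c,y,w). c # y @ w) ` (({..<q}-{a}) \<times> seqs q (b-1) \<times> ins_ball q t b (a#x))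
     \<subseteq> ins_ball q (Suc t) b (a#x)"
  proof
    fix z assume "z \<in> (\<lambda>(c,y,w). c # y @ w) ` (({..<q}-{a}) \<times> seqs q (b-1) \<times> ins_ball q t b (a#x))"
    then obtain p where p: "p \<in> ({..<q}-{a}) \<times> seqs q (b-1) \<times> ins_ball q t b (a#x)"
      "z = (\<lambda>(c,y,w). c # y @ w) p" by (rule imageE)
    obtain c y w where pp: "p = (c,y,w)" by (cases p)
    have z: "z = c # y @ w" "c \<in> {..<q}-{a}" "y \<in> seqs q (b-1)"
      "w \<in> ins_ball q t b (a#x)" using p unfolding pp by simp_all
    have "c # y \<in> seqs q b" using z(2,3) b unfolding seqs_def by auto
    from ins_front[OF this z(4)] show "z \<in> ins_ball q (Suc t) b (a#x)" unfolding z(1)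
      by (simp only: append_Cons)
  qed
  ultimately show "Cons a ` ins_ball q (Suc t) b x \<union>
     (\<lambda>(c,y,w). c # y @ w) ` (({..<q}-{a}) \<times> seqs q (b-1) \<times> ins_ball q t b (a#x))
     \<subseteq> ins_ball q (Suc t) b (a#x)" by (rule Un_least)
qed


lemma pascal_sum:
  fixes r m t :: nat
  shows "(\<Sum>i\<le>Suc t. (Suc m choose i)*r^i) = (\<Sum>i\<le>Suc t. (m choose i)*r^i) + r*(\<Sum>i\<le>t. (m choose i)*r^i)"
proof -
  have L: "(\<Sum>i\<le>Suc t. (Suc m choose i)*r^i) = 1 + (\<Sum>i\<le>t. (Suc m choose Suc i)*r^Suc i)"
    by (subst sum.atMost_Suc_shift) simp
  also have "\<dots> = 1 + (\<Sum>i\<le>t. (m choose i)*r^Suc i + (m choose Suc i)*r^Suc i)"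
    by (simp add: algebra_simps)
  also have "\<dots> = 1 + (\<Sum>i\<le>t. (m choose Suc i)*r^Suc i) + r*(\<Sum>i\<le>t. (m choose i)*r^i)"
    by (simp add: sum.distrib sum_distrib_left algebra_simps)
  also have "1 + (\<Sum>i\<le>t. (m choose Suc i)*r^Suc i) = (\<Sum>i\<le>Suc t. (m choose i)*r^i)"
    by (subst sum.atMost_Suc_shift) simp
  finally show ?thesis .
qed

definition FF :: "nat \<Rightarrow> nat \<Rightarrow> nat \<Rightarrow> nat \<Rightarrow> nat" where
  "FF q b n t = q ^ (t * (b - 1)) * (\<Sum>i = 0..t. ((n + t) choose i) * (q - 1) ^ i)"

lemma FF_rec:
  assumes "b \<ge> 1"
  shows "FF q b (Suc n) (Suc t) = FF q b n (Suc t) + (q-1) * q^(b-1) * FF q b (Suc n) t"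
proof -
  have e: "q ^ (Suc t * (b-1)) = q^(b-1) * q^(t*(b-1))" by (simp add: power_add)
  have p: "(\<Sum>i\<le>Suc t. (Suc (n+t+1) choose i)*(q-1)^i) = (\<Sum>i\<le>Suc t. ((n+t+1) choose i)*(q-1)^i)
     + (q-1)*(\<Sum>i\<le>t. ((n+t+1) choose i)*(q-1)^i)" by (rule pascal_sum)
  show ?thesis unfolding FF_def atLeast0AtMost e
    using p by (simp add: algebra_simps)
qed

lemma FF_zero: "q \<ge> 1 \<Longrightarrow> b \<ge> 1 \<Longrightarrow> FF q b 0 t = q ^ (t*b)"
proof -
  assume q: "q \<ge> 1" and b: "b \<ge> 1"
  have "(\<Sum>i = 0..t. (t choose i) * (q - 1) ^ i) = ((q-1)+1)^t"
    unfolding binomial atLeast0AtMost by simp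
  also have "\<dots> = q^t" using q by simp
  finally have s: "(\<Sum>i = 0..t. (t choose i) * (q - 1) ^ i) = q^t" .
  have "t*b = t*(b-1) + t" using b by (simp add: algebra_simps)
  then show ?thesis unfolding FF_def using s by (simp add: power_add)
qed

lemma count:
  assumes q: "q \<ge> 2" and b: "b \<ge> 1"
  shows "set x \<subseteq> {..<q} \<Longrightarrow> card (ins_ball q t b x) = FF q b (length x) t"
proof (induction x arbitrary: t)
  case Nil
  then show ?case using q b by (simp add: ins_empty card_seqs FF_zero)
next
  case (Cons a x)
  have vx: "set x \<subseteq> {..<q}" and a: "a < q" using Cons.prems by auto
  show ?case
  proof (induction t)
    case 0 then show ?case by (simp add: FF_def)
  next
    case (Suc t)
    let ?A = "Cons a ` ins_ball q (Suc t) b x"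
    let ?P = "({..<q}-{a}) \<times> seqs q (b-1) \<times> ins_ball q t b (a#x)"
    let ?g = "(\<lambda>(c,y,w). c # y @ w) :: nat \<times> nat list \<times> nat list \<Rightarrow> nat list"
    have D: "ins_ball q (Suc t) b (a#x) = ?A \<union> ?g ` ?P" by (rule decomp[OF b Cons.prems])
    have fin1: "finite ?A" by (rule finite_imageI[OF finite_ins[OF vx]])
    have finP: "finite ?P" using finite_ins[OF Cons.prems] finite_seqs by simp
    have disj: "?A \<inter> ?g ` ?P = {}"
    proof (rule ccontr)
      assume "?A \<inter> ?g ` ?P \<noteq> {}"
      then obtain z where z1: "z \<in> ?A" and z2: "z \<in> ?g ` ?P" by blast
      from z2 obtain p where p: "p \<in> ?P" "z = ?g p" by (rule imageE)
      obtain c y w where pp: "p = (c,y,w)" by (cases p)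
      have "c \<noteq> a" "z = c # y @ w" using p unfolding pp by simp_all
      moreover obtain u where "z = a # u" using z1 by (rule imageE)
      ultimately show False by simp
    qed
    have inj: "inj_on ?g ?P"
    proof (rule inj_onI)
      fix p p' assume "p \<in> ?P" "p' \<in> ?P" "?g p = ?g p'"
      moreover obtain c y w where pp: "p = (c,y,w)" by (cases p)
      moreover obtain c' y' w' where pp': "p' = (c',y',w')" by (cases p')
      ultimately have "c = c'" "y @ w = y' @ w'" "length y = length y'"
        by (simp_all add: seqs_def)
      then show "p = p'" using pp pp' by simp
    qed
    have cP: "card ?P = (q-1) * (q^(b-1) * FF q b (Suc (length x)) t)"
      using Suc.IH a by (simp add: card_cartesian_product card_seqs)
    have "card (ins_ball q (Suc t) b (a#x)) = card ?A + card (?g ` ?P)"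
      unfolding D by (rule card_Un_disjoint[OF fin1 finite_imageI[OF finP] disj])
    also have "card ?A = card (ins_ball q (Suc t) b x)" by (rule card_image) simp
    also have "\<dots> = FF q b (length x) (Suc t)" by (rule Cons.IH[OF vx])
    also have "card (?g ` ?P) = card ?P" by (rule card_image[OF inj])
    finally show ?case unfolding cP using FF_rec[OF b] by simp
  qed
qed

theorem theorem3p1:
  fixes n t q b :: nat
  assumes "q \<ge> 2" and "b \<ge> 1"
  shows "(\<forall>x \<in> seqs q n. card (ins_ball q t b x) =
            q ^ (t * (b - 1)) * (\<Sum>i = 0..t. ((n + t) choose i) * (q - 1) ^ i))
       \<and> I_max q b n t = q ^ (t * (b - 1)) * (\<Sum>i = 0..t. ((n + t) choose i) * (q - 1) ^ i)"
proof -
  have all: "\<forall>x \<in> seqs q n. card (ins_ball q t b x) = FF q b n t"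
  proof
    fix x assume "x \<in> seqs q n"
    then have "set x \<subseteq> {..<q}" "length x = n" by (auto simp: seqs_def)
    then show "card (ins_ball q t b x) = FF q b n t" using count[OF assms] by simp
  qed
  have ne: "replicate n 0 \<in> seqs q n" using assms by (auto simp: seqs_def)
  have "(\<lambda>x. card (ins_ball q t b x)) ` seqs q n = {FF q b n t}"
    using all ne by force
  then have "I_max q b n t = FF q b n t" unfolding I_max_def by simp
  with all show ?thesis unfolding FF_def by simp
qed

end
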